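(* Let $X$ be a normal-variance mixture random variable with cumulative distribution function $F(x)=\int\Phi\big(\frac{x-\mu(v)}{\sigma(v)}\big)\,dF_v(v)$, where $F_v$ is the distribution of a mixing variable $V$ and $\mu(\cdot)$, $\sigma(\cdot)>0$ are functions, so that $\mu_V:=\mathrm{E}(X\mid V)=\mu(V)$ and $\sigma_V^2:=\mathrm{Var}(X\mid V)=\sigma(V)^2$. Let $y\in\mathbb{R}$ and define $$M(\mu,\sigma^2)=2\sigma\varphi\Big(\frac{\mu}{\sigma}\Big)+\mu\Big(2\Phi\Big(\frac{\mu}{\sigma}\Big)-1\Big).$$ Let $V_j^{(i)}$, $j=1,2$, $i=1,\dots,N$, be independent draws from $F_v$ and set $$\mathrm{CRPS}_N^{RB}(F,y)=\frac1N\sum_{i=1}^N\Big[M\big(\mu_{V_1^{(i)}}-y,\ \sigma^2_{V_1^{(i)}}\big)-\frac12 M\big(\mu_{V_1^{(i)}}-\mu_{V_2^{(i)}},\ \sigma^2_{V_1^{(i)}}+\sigma^2_{V_2^{(i)}}\big)\Big].$$ Then $\mathrm{E}(\mathrm{CRPS}_N^{RB}(F,y))=\mathrm{CRPS}(F,y)$ and $\mathrm{Var}(\mathrm{CRPS}_N^{RB}(F,y))\le\mathrm{Var}(\mathrm{CRPS}_N(F,y))$.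
   Context: $\Phi$ and $\varphi$ are the standard Gaussian CDF and density. The continuous ranked probability score is $\mathrm{CRPS}(F,y)=\mathrm{E}|Y^{(1)}-y|-\frac12\mathrm{E}|Y^{(1)}-Y^{(2)}|$ with $Y^{(1)},Y^{(2)}$ independent with distribution $F$. $\mathrm{CRPS}_N(F,y)$ is the plain Monte Carlo estimator $\frac1N\sum_{i=1}^N\big[|Y_1^{(i)}-y|-\frac12|Y_1^{(i)}-Y_2^{(i)}|\big]$ based on $N$ independent draws $Y_1^{(i)},Y_2^{(i)}$ ($i=1,\dots,N$, all mutually independent) from $F$. *)

theory Defs
  imports "HOL-Probability.Probability"
begin

definition std_phi :: "real \<Rightarrow> real" where
  "std_phi x = std_normal_density x"

definition std_Phi :: "real \<Rightarrow> real" where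
  "std_Phi x = measure (density lborel std_normal_density) {..x}"

definition Mfun :: "real \<Rightarrow> real \<Rightarrow> real" where
  "Mfun m s2 = 2 * sqrt s2 * std_phi (m / sqrt s2) + m * (2 * std_Phi (m / sqrt s2) - 1)"

definition crps :: "real measure \<Rightarrow> real \<Rightarrow> real" where
  "crps F y = (\<integral>x. \<bar>x - y\<bar> \<partial>F) - 1/2 * (\<integral>x. (\<integral>x'. \<bar>x - x'\<bar> \<partial>F) \<partial>F)"

definition draw_idx :: "nat \<Rightarrow> (nat \<times> nat) set" where
  "draw_idx N = {..<N} \<times> {1, 2}"

text \<open>Plain Monte Carlo estimator CRPS_N(F,y) as a function of the draws Y_j^(i) = w (i,j).\<close>
definition crps_N :: "nat \<Rightarrow> real \<Rightarrow> (nat \<times> nat \<Rightarrow> real) \<Rightarrow> real" where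
  "crps_N N y w = (1 / real N) * (\<Sum>i<N. \<bar>w (i,1) - y\<bar> - 1/2 * \<bar>w (i,1) - w (i,2)\<bar>)"

text \<open>Rao-Blackwellised estimator as a function of the draws V_j^(i) = w (i,j).\<close>
definition crps_N_RB :: "('v \<Rightarrow> real) \<Rightarrow> ('v \<Rightarrow> real) \<Rightarrow> nat \<Rightarrow> real \<Rightarrow> (nat \<times> nat \<Rightarrow> 'v) \<Rightarrow> real" where
  "crps_N_RB \<mu> \<sigma> N y w = (1 / real N) * (\<Sum>i<N.
      Mfun (\<mu> (w (i,1)) - y) ((\<sigma> (w (i,1)))\<^sup>2)
      - 1/2 * Mfun (\<mu> (w (i,1)) - \<mu> (w (i,2))) ((\<sigma> (w (i,1)))\<^sup>2 + (\<sigma> (w (i,2)))\<^sup>2))"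

definition expect :: "'a measure \<Rightarrow> ('a \<Rightarrow> real) \<Rightarrow> real" where
  "expect P X = (\<integral>w. X w \<partial>P)"

definition var_ext :: "'a measure \<Rightarrow> ('a \<Rightarrow> real) \<Rightarrow> ennreal" where
  "var_ext P X = (\<integral>\<^sup>+ w. ennreal ((X w - expect P X)\<^sup>2) \<partial>P)"

end

theory Submission
  imports Defs "HOL-Real_Asymp.Real_Asymp"
begin


lemma phi_int_abs: "integrable lborel (\<lambda>x. std_normal_density x * \<bar>x\<bar>)"
  using integrable_std_normal_moment_abs[of 1] by simp

lemma phi_int_x: "integrable lborel (\<lambda>x. std_normal_density x * x)"
  using integrable_std_normal_moment[of 1] by simp

lemma phi_int_x0: "(\<integral>x. std_normal_density x * x \<partial>lborel) = 0"
  using integral_std_normal_moment_odd[of 0] by simp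

lemma phi_sym: "std_normal_density (- x) = std_normal_density x"
  by (simp add: std_normal_density_def)

lemma phi_D: "DERIV (\<lambda>x. - std_normal_density x) x :> std_normal_density x * x"
  unfolding std_normal_density_def
  by (rule derivative_eq_intros refl | simp)+

lemma phi_lim: "((\<lambda>x. - std_normal_density x) \<longlongrightarrow> 0) at_top"
  unfolding std_normal_density_def by real_asymp

lemma FTC_pos:
  assumes "t \<ge> 0"
  shows "(\<integral>z. std_normal_density z * z * indicator {t..} z \<partial>lborel) = std_normal_density t"
proof -
  have "(\<integral>\<^sup>+z. ennreal (std_normal_density z * z) * indicator {t..} z \<partial>lborel) = 0 - (- std_normal_density t)"
    by (rule nn_integral_FTC_atLeast[OF _ phi_D _ phi_lim]) (use assms in auto)
  then have "(\<integral>\<^sup>+z. ennreal (std_normal_density z * z * indicator {t..} z) \<partial>lborel) = ennreal (std_normal_density t)"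
    by (simp add: indicator_mult_ennreal mult.commute)
  then show ?thesis
    by (intro has_bochner_integral_integral_eq has_bochner_integral_nn_integral) (use assms in \<open>auto split: split_indicator\<close>)
qed

lemma ind_int: "integrable lborel (\<lambda>z. std_normal_density z * z * indicator A z)"
  if "A \<in> sets borel" for A
  by (rule Bochner_Integration.integrable_bound[OF phi_int_abs]) (use that in \<open>auto split: split_indicator simp: abs_mult\<close>)

lemma ind_int0: "integrable lborel (\<lambda>z. std_normal_density z * indicator A z)"
  if "A \<in> sets borel" for A
  by (rule Bochner_Integration.integrable_bound[OF integrable_normal_density]) (use that in \<open>auto split: split_indicator\<close>)

lemma FTC_all:
  "(\<integral>z. std_normal_density z * z * indicator {t..} z \<partial>lborel) = std_normal_density t"
proof (cases "t \<ge> 0")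
  case True then show ?thesis by (rule FTC_pos)
next
  case False
  have split: "(\<integral>z. std_normal_density z * z \<partial>lborel) =
     (\<integral>z. std_normal_density z * z * indicator {t..} z \<partial>lborel) + (\<integral>z. std_normal_density z * z * indicator {..<t} z \<partial>lborel)"
    apply (subst Bochner_Integration.integral_add[symmetric])
      apply (rule ind_int, simp)
     apply (rule ind_int, simp)
    apply (rule Bochner_Integration.integral_cong, auto split: split_indicator)
    done
  have refl: "(\<integral>z. std_normal_density z * z * indicator {..<t} z \<partial>lborel) =
     (\<integral>z. std_normal_density (0 + -1 * z) * (0 + -1 * z) * indicator {..<t} (0 + -1 * z) \<partial>lborel)"
    using lborel_integral_real_affine[of "-1" "\<lambda>z. std_normal_density z * z * indicator {..<t} z" 0] by simp
  also have "\<dots> = - (\<integral>z. std_normal_density z * z * indicator {-t<..} z \<partial>lborel)"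
    by (subst integral_minus[symmetric]) (auto intro!: Bochner_Integration.integral_cong simp: phi_sym split: split_indicator)
  also have "(\<integral>z. std_normal_density z * z * indicator {-t<..} z \<partial>lborel) = (\<integral>z. std_normal_density z * z * indicator {-t..} z \<partial>lborel)"
    by (rule integral_cong_AE) (auto intro!: AE_I'[where N="{-t}"] split: split_indicator)
  also have "\<dots> = std_normal_density t"
    using FTC_pos[of "-t"] False by (simp add: phi_sym)
  finally show ?thesis using split phi_int_x0 by simp
qed

lemma Phi_int: "std_Phi t = (\<integral>z. std_normal_density z * indicator {..t} z \<partial>lborel)"
proof -
  have "emeasure (density lborel std_normal_density) {..t} = (\<integral>\<^sup>+z. ennreal (std_normal_density z * indicator {..t} z) \<partial>lborel)"
    by (subst emeasure_density) (auto intro!: nn_integral_cong split: split_indicator)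
  also have "\<dots> = ennreal (\<integral>z. std_normal_density z * indicator {..t} z \<partial>lborel)"
    by (rule nn_integral_eq_integral) (auto intro!: ind_int0 split: split_indicator)
  finally show ?thesis unfolding std_Phi_def measure_def
    by (simp add: integral_nonneg_AE split: split_indicator)
qed

lemma Phi_upper: "(\<integral>z. std_normal_density z * indicator {t..} z \<partial>lborel) = 1 - std_Phi t"
proof -
  have "(\<integral>z. std_normal_density z \<partial>lborel) =
     (\<integral>z. std_normal_density z * indicator {t<..} z \<partial>lborel) + (\<integral>z. std_normal_density z * indicator {..t} z \<partial>lborel)"
    apply (subst Bochner_Integration.integral_add[symmetric])
      apply (rule ind_int0, simp)
     apply (rule ind_int0, simp)
    apply (rule Bochner_Integration.integral_cong, auto split: split_indicator)
    done
  moreover have "(\<integral>z. std_normal_density z * indicator {t<..} z \<partial>lborel) = (\<integral>z. std_normal_density z * indicator {t..} z \<partial>lborel)"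
    by (rule integral_cong_AE) (auto intro!: AE_I'[where N="{t}"] split: split_indicator)
  ultimately show ?thesis using Phi_int[of t] by simp
qed

lemma G0_minus:
  "(\<integral>z. std_normal_density z * \<bar>t - z\<bar> \<partial>lborel) = 2 * std_normal_density t + t * (2 * std_Phi t - 1)"
proof -
  have e: "(\<lambda>z. std_normal_density z * \<bar>t - z\<bar>) = (\<lambda>z. t * std_normal_density z - std_normal_density z * z
      + 2 * (std_normal_density z * z * indicator {t..} z) - 2 * t * (std_normal_density z * indicator {t..} z))"
    by (auto split: split_indicator simp: algebra_simps abs_if)
  have "has_bochner_integral lborel (\<lambda>z. t * std_normal_density z - std_normal_density z * z
      + 2 * (std_normal_density z * z * indicator {t..} z) - 2 * t * (std_normal_density z * indicator {t..} z))
      (t * 1 - 0 + 2 * std_normal_density t - 2 * t * (1 - std_Phi t))"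
    apply (intro has_bochner_integral_diff has_bochner_integral_add has_bochner_integral_mult_right)
    using phi_int_x phi_int_x0 ind_int[of "{t..}"] ind_int0[of "{t..}"] FTC_all[of t] Phi_upper[of t]
    by (auto simp: has_bochner_integral_iff)
  then show ?thesis unfolding e by (simp add: has_bochner_integral_iff algebra_simps)
qed

lemma G0_int: "integrable lborel (\<lambda>z. std_normal_density z * \<bar>m + s * z\<bar>)"
proof (rule Bochner_Integration.integrable_bound[where f="\<lambda>z. \<bar>m\<bar> * std_normal_density z + \<bar>s\<bar> * (std_normal_density z * \<bar>z\<bar>)"])
  show "integrable lborel (\<lambda>z. \<bar>m\<bar> * std_normal_density z + \<bar>s\<bar> * (std_normal_density z * \<bar>z\<bar>))"
    by (intro Bochner_Integration.integrable_add integrable_mult_right phi_int_abs integrable_normal_density) simp_all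
  show "AE x in lborel. norm (std_normal_density x * \<bar>m + s * x\<bar>) \<le> norm (\<bar>m\<bar> * std_normal_density x + \<bar>s\<bar> * (std_normal_density x * \<bar>x\<bar>))"
  proof (rule AE_I2)
    fix x
    have p: "std_normal_density x \<ge> 0" by simp
    have "std_normal_density x * \<bar>m + s * x\<bar> \<le> std_normal_density x * (\<bar>m\<bar> + \<bar>s\<bar> * \<bar>x\<bar>)"
      by (rule mult_left_mono[OF _ p]) (metis abs_mult abs_triangle_ineq)
    then show "norm (std_normal_density x * \<bar>m + s * x\<bar>) \<le> norm (\<bar>m\<bar> * std_normal_density x + \<bar>s\<bar> * (std_normal_density x * \<bar>x\<bar>))"
      using p by (simp add: algebra_simps)
  qed
qed simp

lemma G_std:
  assumes "s > 0"
  shows "(\<integral>z. std_normal_density z * \<bar>m + s * z\<bar> \<partial>lborel) = Mfun m (s\<^sup>2)"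
proof -
  let ?c = "m / s"
  have "(\<integral>z. std_normal_density z * \<bar>m + s * z\<bar> \<partial>lborel) = (\<integral>z. s * (std_normal_density z * \<bar>?c + z\<bar>) \<partial>lborel)"
  proof (rule Bochner_Integration.integral_cong)
    fix z
    have "\<bar>m + s * z\<bar> = \<bar>s * (?c + z)\<bar>" using assms by (simp add: algebra_simps)
    then show "std_normal_density z * \<bar>m + s * z\<bar> = s * (std_normal_density z * \<bar>?c + z\<bar>)"
      using assms by (simp add: abs_mult)
  qed simp
  also have "\<dots> = s * (\<integral>z. std_normal_density z * \<bar>?c + z\<bar> \<partial>lborel)" by simp
  also have "(\<integral>z. std_normal_density z * \<bar>?c + z\<bar> \<partial>lborel) = (\<integral>z. std_normal_density z * \<bar>?c - z\<bar> \<partial>lborel)"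
    using lborel_integral_real_affine[of "-1" "\<lambda>z. std_normal_density z * \<bar>?c + z\<bar>" 0] by (simp add: phi_sym)
  also have "\<dots> = 2 * std_normal_density ?c + ?c * (2 * std_Phi ?c - 1)" by (rule G0_minus)
  finally show ?thesis using assms by (simp add: Mfun_def std_phi_def algebra_simps)
qed

abbreviation "N0 \<equiv> density lborel std_normal_density"

lemma N0_prob: "prob_space N0"
  using prob_space_normal_density[of 1 0] by simp

lemma sets_N0[simp]: "sets N0 = sets borel" by simp
lemma space_N0[simp]: "space N0 = UNIV" by simp

lemma GN1_int: "integrable N0 (\<lambda>z. \<bar>m + s * z\<bar>)"
  by (subst integrable_density) (auto simp: G0_int)

lemma GN1:
  assumes "s > 0"
  shows "(\<integral>z. \<bar>m + s * z\<bar> \<partial>N0) = Mfun m (s\<^sup>2)"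
  by (subst integral_density) (auto simp: G_std[OF assms])

lemma nd_affine:
  assumes "s > 0"
  shows "normal_density m s (m + s * z) = std_normal_density z / s"
  using assms by (simp add: normal_density_def real_sqrt_mult power_mult_distrib field_simps)

lemma Gn:
  assumes "s > 0"
  shows "(\<integral>x. normal_density m s x * \<bar>x\<bar> \<partial>lborel) = Mfun m (s\<^sup>2)"
proof -
  have "(\<integral>x. normal_density m s x * \<bar>x\<bar> \<partial>lborel) = \<bar>s\<bar> * (\<integral>z. normal_density m s (m + s * z) * \<bar>m + s * z\<bar> \<partial>lborel)"
    using lborel_integral_real_affine[of s "\<lambda>x. normal_density m s x * \<bar>x\<bar>" m] assms by simp
  also have "\<dots> = s * (\<integral>z. (1/s) * (std_normal_density z * \<bar>m + s * z\<bar>) \<partial>lborel)"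
    using assms by (simp add: nd_affine)
  also have "\<dots> = (\<integral>z. std_normal_density z * \<bar>m + s * z\<bar> \<partial>lborel)"
    using assms by simp
  finally show ?thesis using G_std[OF assms] by simp
qed

lemma Gn_int:
  assumes "s > 0"
  shows "integrable lborel (\<lambda>x. normal_density m s x * \<bar>x\<bar>)"
proof -
  have "integrable lborel (\<lambda>z. normal_density m s (m + s * z) * \<bar>m + s * z\<bar>)"
    using integrable_mult_right[OF G0_int[of m s], of "1/s"] assms by (simp add: nd_affine)
  then show ?thesis using lborel_integrable_real_affine_iff[of s "\<lambda>x. normal_density m s x * \<bar>x\<bar>" m] assms by simp
qed

lemma N0N0_fst: "distr (N0 \<Otimes>\<^sub>M N0) N0 fst = N0"
  by (rule prob_space.distr_pair_fst[OF N0_prob])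

lemma N0N0_snd: "distr (N0 \<Otimes>\<^sub>M N0) N0 snd = N0"
proof (rule measure_eqI)
  interpret N: prob_space N0 by (rule N0_prob)
  fix A assume A: "A \<in> sets (distr (N0 \<Otimes>\<^sub>M N0) N0 snd)"
  then have "emeasure (distr (N0 \<Otimes>\<^sub>M N0) N0 snd) A = emeasure (N0 \<Otimes>\<^sub>M N0) (space N0 \<times> A)"
    by (subst emeasure_distr) (auto simp: space_pair_measure intro!: arg_cong2[where f=emeasure])
  also have "\<dots> = emeasure N0 A"
    using A by (subst N.emeasure_pair_measure_Times) (auto simp: N.emeasure_space_1[simplified])
  finally show "emeasure (distr (N0 \<Otimes>\<^sub>M N0) N0 snd) A = emeasure N0 A" .
qed simp

lemma GN2:
  assumes "s1 > 0" "s2 > 0"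
  shows "integrable (N0 \<Otimes>\<^sub>M N0) (\<lambda>p. \<bar>m + s1 * fst p - s2 * snd p\<bar>)"
    "(\<integral>p. \<bar>m + s1 * fst p - s2 * snd p\<bar> \<partial>(N0 \<Otimes>\<^sub>M N0)) = Mfun m (s1\<^sup>2 + s2\<^sup>2)"
proof -
  interpret N: prob_space N0 by (rule N0_prob)
  interpret P: pair_prob_space N0 N0 ..
  have cf: "distr (N0 \<Otimes>\<^sub>M N0) M' fst = N0" if "sets M' = sets borel" for M'
    using N0N0_fst that by (metis distr_cong sets_N0)
  have cs: "distr (N0 \<Otimes>\<^sub>M N0) M' snd = N0" if "sets M' = sets borel" for M'
    using N0N0_snd that by (metis distr_cong sets_N0)
  have dfst: "distributed (N0 \<Otimes>\<^sub>M N0) lborel fst std_normal_density"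
    unfolding distributed_def using cf[of lborel] by auto
  have dsnd: "distributed (N0 \<Otimes>\<^sub>M N0) lborel snd std_normal_density"
    unfolding distributed_def using cs[of lborel] by auto
  have ind: "prob_space.indep_var (N0 \<Otimes>\<^sub>M N0) borel fst borel snd"
  proof (subst P.indep_var_distribution_eq, intro conjI)
    show "fst \<in> measurable (N0 \<Otimes>\<^sub>M N0) borel" "snd \<in> measurable (N0 \<Otimes>\<^sub>M N0) borel" by auto
    have "distr (N0 \<Otimes>\<^sub>M N0) borel fst = N0" 
      using cf[of borel] by auto
    moreover have "distr (N0 \<Otimes>\<^sub>M N0) borel snd = N0" 
      using cs[of borel] by auto
    moreover have "distr (N0 \<Otimes>\<^sub>M N0) (borel \<Otimes>\<^sub>M borel) (\<lambda>x. (fst x, snd x)) = N0 \<Otimes>\<^sub>M N0"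
      by (simp, rule distr_id2, rule sets_pair_measure_cong) auto
    ultimately show "distr (N0 \<Otimes>\<^sub>M N0) borel fst \<Otimes>\<^sub>M distr (N0 \<Otimes>\<^sub>M N0) borel snd =
        distr (N0 \<Otimes>\<^sub>M N0) (borel \<Otimes>\<^sub>M borel) (\<lambda>x. (fst x, snd x))" by simp
  qed
  have ind2: "prob_space.indep_var (N0 \<Otimes>\<^sub>M N0) borel (\<lambda>p. m + s1 * fst p) borel (\<lambda>p. s2 * snd p)"
    using P.indep_var_compose[OF ind, of "\<lambda>x. m + s1 * x" borel "\<lambda>x. s2 * x" borel]
    by (simp add: comp_def)
  have d1: "distributed (N0 \<Otimes>\<^sub>M N0) lborel (\<lambda>p. m + s1 * fst p) (normal_density m s1)"
    using P.normal_density_affine[OF dfst, where \<alpha>=s1 and \<beta>=m] assms by simp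
  have d2: "distributed (N0 \<Otimes>\<^sub>M N0) lborel (\<lambda>p. s2 * snd p) (normal_density 0 s2)"
    using P.normal_density_affine[OF dsnd, where \<alpha>=s2 and \<beta>=0] assms by simp
  have d: "distributed (N0 \<Otimes>\<^sub>M N0) lborel (\<lambda>p. m + s1 * fst p - s2 * snd p) (normal_density m (sqrt (s1\<^sup>2 + s2\<^sup>2)))"
    using P.diff_indep_normal[OF ind2 assms d1 d2] by simp
  have sp: "sqrt (s1\<^sup>2 + s2\<^sup>2) > 0" using assms by (simp add: add_pos_pos)
  show "(\<integral>p. \<bar>m + s1 * fst p - s2 * snd p\<bar> \<partial>(N0 \<Otimes>\<^sub>M N0)) = Mfun m (s1\<^sup>2 + s2\<^sup>2)"
    using distributed_integral[OF d, of abs] Gn[OF sp, of m] sp by (simp add: add_nonneg_nonneg)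
  show "integrable (N0 \<Otimes>\<^sub>M N0) (\<lambda>p. \<bar>m + s1 * fst p - s2 * snd p\<bar>)"
    using Gn_int[OF sp, of m] distributed_integrable[OF d, of abs] sp by simp
qed


lemma Phi_emeasure: "emeasure N0 {..c} = ennreal (std_Phi c)"
proof -
  interpret N: prob_space N0 by (rule N0_prob)
  show ?thesis unfolding std_Phi_def by (simp add: N.emeasure_eq_measure)
qed

lemma Phi_mono: "mono std_Phi"
proof -
  interpret N: prob_space N0 by (rule N0_prob)
  show ?thesis unfolding std_Phi_def mono_def by (auto intro!: N.finite_measure_mono)
qed

lemma Phi_meas[measurable]: "std_Phi \<in> borel_measurable borel"
  by (rule borel_measurable_mono[OF Phi_mono])

lemma Phi_bounds: "0 \<le> std_Phi c" "std_Phi c \<le> 1"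
proof -
  interpret N: prob_space N0 by (rule N0_prob)
  show "0 \<le> std_Phi c" "std_Phi c \<le> 1" unfolding std_Phi_def by auto
qed

lemma phi_meas[measurable]: "std_phi \<in> borel_measurable borel"
  unfolding std_phi_def by simp

lemma Mfun_meas[measurable]:
  assumes [measurable]: "f \<in> borel_measurable M" "g \<in> borel_measurable M"
  shows "(\<lambda>x. Mfun (f x) (g x)) \<in> borel_measurable M"
  unfolding Mfun_def by measurable

lemma mixture_eq:
  fixes Mv :: "'v measure" and \<mu> \<sigma> :: "'v \<Rightarrow> real" and F :: "real measure"
  assumes Mv: "prob_space Mv"
    and [measurable]: "\<mu> \<in> borel_measurable Mv" "\<sigma> \<in> borel_measurable Mv"
    and pos: "\<And>v. v \<in> space Mv \<Longrightarrow> \<sigma> v > 0"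
    and F: "prob_space F" "sets F = sets borel"
    and cdfF: "\<And>x. measure F {..x} = (\<integral>v. std_Phi ((x - \<mu> v) / \<sigma> v) \<partial>Mv)"
  shows "F = distr (Mv \<Otimes>\<^sub>M N0) borel (\<lambda>p. \<mu> (fst p) + \<sigma> (fst p) * snd p)"
proof -
  interpret V: prob_space Mv by (rule Mv)
  interpret N: prob_space N0 by (rule N0_prob)
  interpret K: pair_prob_space Mv N0 ..
  let ?K = "Mv \<Otimes>\<^sub>M N0" and ?h = "\<lambda>p. \<mu> (fst p) + \<sigma> (fst p) * snd p"
  have hm[measurable]: "?h \<in> borel_measurable ?K" by measurable
  have D: "prob_space (distr ?K borel ?h)" by (rule K.prob_space_distr) simp
  show ?thesis
  proof (rule cdf_unique)
    show "real_distribution F" using F by (simp add: real_distribution_def real_distribution_axioms_def)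
    show "real_distribution (distr ?K borel ?h)" using D by (simp add: real_distribution_def real_distribution_axioms_def)
    show "cdf F = cdf (distr ?K borel ?h)"
    proof
      fix x
      have set: "?h -` {..x} \<inter> space ?K \<in> sets ?K" by measurable
      have "emeasure (distr ?K borel ?h) {..x} = emeasure ?K (?h -` {..x} \<inter> space ?K)"
        by (rule emeasure_distr) auto
      also have "\<dots> = (\<integral>\<^sup>+ v. emeasure N0 (Pair v -` (?h -` {..x} \<inter> space ?K)) \<partial>Mv)"
        by (rule N.emeasure_pair_measure_alt[OF set])
      also have "\<dots> = (\<integral>\<^sup>+ v. ennreal (std_Phi ((x - \<mu> v) / \<sigma> v)) \<partial>Mv)"
      proof (rule nn_integral_cong)
        fix v assume v: "v \<in> space Mv"
        have "Pair v -` (?h -` {..x} \<inter> space ?K) = {..(x - \<mu> v) / \<sigma> v}"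
          using pos[OF v] v by (auto simp: space_pair_measure field_simps)
        then show "emeasure N0 (Pair v -` (?h -` {..x} \<inter> space ?K)) = ennreal (std_Phi ((x - \<mu> v) / \<sigma> v))"
          by (simp add: Phi_emeasure)
      qed
      also have "\<dots> = ennreal (\<integral> v. std_Phi ((x - \<mu> v) / \<sigma> v) \<partial>Mv)"
        by (rule nn_integral_eq_integral)
           (auto intro!: V.integrable_const_bound[where B=1] simp: Phi_bounds)
      finally have "measure (distr ?K borel ?h) {..x} = (\<integral> v. std_Phi ((x - \<mu> v) / \<sigma> v) \<partial>Mv)"
        by (simp add: measure_def integral_nonneg_AE Phi_bounds)
      then show "cdf F x = cdf (distr ?K borel ?h) x" by (simp add: cdf_def cdfF)
    qed
  qed
qed



lemma prod_two:
  assumes "finite I" "a \<in> I" "b \<in> I" "a \<noteq> b"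
  shows "(\<Prod>k\<in>I. (if k = a then x else if k = b then y else 1 :: ennreal)) = x * y"
proof -
  have "(\<Prod>k\<in>I. (if k = a then x else if k = b then y else 1 :: ennreal)) =
        (\<Prod>k\<in>{a,b}. (if k = a then x else if k = b then y else 1 :: ennreal))"
    using assms by (intro prod.mono_neutral_right) auto
  then show ?thesis using assms by simp
qed

lemma PiM_pair:
  fixes M :: "'a measure"
  assumes M: "prob_space M" and I: "finite I" "a \<in> I" "b \<in> I" "a \<noteq> b"
  shows "distr (PiM I (\<lambda>_. M)) (M \<Otimes>\<^sub>M M) (\<lambda>z. (z a, z b)) = M \<Otimes>\<^sub>M M"
proof -
  interpret M: prob_space M by (rule M)
  interpret P: finite_product_prob_space "\<lambda>_. M" I
    by unfold_locales (auto simp: I M)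
  have meas[measurable]: "(\<lambda>z. (z a, z b)) \<in> measurable (PiM I (\<lambda>_. M)) (M \<Otimes>\<^sub>M M)"
    using I by measurable
  show ?thesis
  proof (rule pair_measure_eqI[symmetric])
    show "sigma_finite_measure M" "sigma_finite_measure M" by unfold_locales
    show "sets (M \<Otimes>\<^sub>M M) = sets (distr (PiM I (\<lambda>_. M)) (M \<Otimes>\<^sub>M M) (\<lambda>z. (z a, z b)))" by simp
    fix A B assume A: "A \<in> sets M" and B: "B \<in> sets M"
    have "(\<lambda>z. (z a, z b)) -` (A \<times> B) \<inter> space (PiM I (\<lambda>_. M)) =
        PiE I (\<lambda>k. if k = a then A else if k = b then B else space M)"
      using I A B sets.sets_into_space[OF A] sets.sets_into_space[OF B]
      by (auto simp: space_PiM PiE_iff split: if_splits) (metis subsetD)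
    then have "emeasure (distr (PiM I (\<lambda>_. M)) (M \<Otimes>\<^sub>M M) (\<lambda>z. (z a, z b))) (A \<times> B) =
        emeasure (PiM I (\<lambda>_. M)) (PiE I (\<lambda>k. if k = a then A else if k = b then B else space M))"
      using A B by (subst emeasure_distr) auto
    also have "\<dots> = (\<Prod>k\<in>I. emeasure M (if k = a then A else if k = b then B else space M))"
      using A B by (intro P.emeasure_PiM I) auto
    also have "\<dots> = (\<Prod>k\<in>I. (if k = a then emeasure M A else if k = b then emeasure M B else 1))"
      by (intro prod.cong) (auto simp: M.emeasure_space_1)
    also have "\<dots> = emeasure M A * emeasure M B" by (rule prod_two[OF I])
    finally show "emeasure M A * emeasure M B = emeasure (distr (PiM I (\<lambda>_. M)) (M \<Otimes>\<^sub>M M) (\<lambda>z. (z a, z b))) (A \<times> B)"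
      by simp
  qed
qed

lemma PiM_single:
  fixes M :: "'a measure"
  assumes M: "prob_space M" and "a \<in> I"
  shows "distr (PiM I (\<lambda>_. M)) M (\<lambda>z. z a) = M"
  using distr_PiM_component[of I "\<lambda>_. M" a] assms by simp



lemma T_push:
  fixes Mv :: "'v measure" and \<mu> \<sigma> :: "'v \<Rightarrow> real" and F :: "real measure" and I :: "'i set"
  assumes Mv: "prob_space Mv"
    and [measurable]: "\<mu> \<in> borel_measurable Mv" "\<sigma> \<in> borel_measurable Mv"
    and I: "finite I"
    and FK: "F = distr (Mv \<Otimes>\<^sub>M N0) borel (\<lambda>p. \<mu> (fst p) + \<sigma> (fst p) * snd p)"
  shows "distr (PiM I (\<lambda>_. Mv) \<Otimes>\<^sub>M PiM I (\<lambda>_. N0)) (PiM I (\<lambda>_. F))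
           (\<lambda>p. \<lambda>k\<in>I. \<mu> (fst p k) + \<sigma> (fst p k) * snd p k) = PiM I (\<lambda>_. F)"
proof -
  interpret V: prob_space Mv by (rule Mv)
  interpret N: prob_space N0 by (rule N0_prob)
  interpret K: pair_prob_space Mv N0 ..
  let ?K = "Mv \<Otimes>\<^sub>M N0" and ?h = "\<lambda>p. \<mu> (fst p) + \<sigma> (fst p) * snd p"
  have hm[measurable]: "?h \<in> borel_measurable ?K" by measurable
  have Fp: "prob_space F" unfolding FK by (rule K.prob_space_distr) simp
  have sF[simp]: "sets F = sets borel" unfolding FK by simp
  have fpp: "finite_product_prob_space (\<lambda>_. M) I" if "prob_space M" for M :: "'b measure"
    by (simp add: finite_product_prob_space_def finite_product_sigma_finite_def product_prob_space_def product_sigma_finite_def product_prob_space_axioms_def finite_product_sigma_finite_axioms_def that I prob_space_imp_sigma_finite)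
  interpret PV: finite_product_prob_space "\<lambda>_. Mv" I by (rule fpp[OF Mv])
  interpret PN: finite_product_prob_space "\<lambda>_. N0" I by (rule fpp[OF N0_prob])
  interpret PF: finite_product_prob_space "\<lambda>_. F" I by (rule fpp[OF Fp])
  interpret Om: pair_prob_space "PiM I (\<lambda>_. Mv)" "PiM I (\<lambda>_. N0)" ..
  let ?Om = "PiM I (\<lambda>_. Mv) \<Otimes>\<^sub>M PiM I (\<lambda>_. N0)"
  let ?T = "\<lambda>p. \<lambda>k\<in>I. \<mu> (fst p k) + \<sigma> (fst p k) * snd p k"
  have Tm[measurable]: "?T \<in> measurable ?Om (PiM I (\<lambda>_. F))"
  proof (rule measurable_restrict)
    fix k assume k: "k \<in> I"
    have "(\<lambda>p. \<mu> (fst p k) + \<sigma> (fst p k) * snd p k) \<in> borel_measurable ?Om"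
      using k by measurable
    then show "(\<lambda>p. \<mu> (fst p k) + \<sigma> (fst p k) * snd p k) \<in> measurable ?Om F"
      by (simp add: measurable_cong_sets[OF refl sF])
  qed
  show ?thesis
  proof (rule PF.PiM_eqI[OF I])
    show "sets (distr ?Om (PiM I (\<lambda>_. F)) ?T) = sets (PiM I (\<lambda>_. F))" by simp
    fix A assume A: "\<And>i. i \<in> I \<Longrightarrow> A i \<in> sets F"
    have Ab[measurable]: "\<And>i. i \<in> I \<Longrightarrow> A i \<in> sets borel" using A by simp
    define S where "S k = ?h -` A k \<inter> space ?K" for k
    have S[measurable]: "S k \<in> sets ?K" if "k \<in> I" for k
      unfolding S_def using that by measurable
    have "emeasure (distr ?Om (PiM I (\<lambda>_. F)) ?T) (PiE I A) = emeasure ?Om (?T -` PiE I A \<inter> space ?Om)"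
      by (rule emeasure_distr) (auto intro!: sets_PiM_I_finite I A)
    also have "\<dots> = (\<integral>\<^sup>+ w. emeasure (PiM I (\<lambda>_. N0)) (Pair w -` (?T -` PiE I A \<inter> space ?Om)) \<partial>PiM I (\<lambda>_. Mv))"
      by (rule PN.emeasure_pair_measure_alt) (auto intro!: measurable_sets[OF Tm] sets_PiM_I_finite I A)
    also have "\<dots> = (\<integral>\<^sup>+ w. (\<Prod>k\<in>I. emeasure N0 (Pair (w k) -` S k)) \<partial>PiM I (\<lambda>_. Mv))"
    proof (rule nn_integral_cong)
      fix w assume w: "w \<in> space (PiM I (\<lambda>_. Mv))"
      have "Pair w -` (?T -` PiE I A \<inter> space ?Om) = PiE I (\<lambda>k. Pair (w k) -` S k)"
      proof (rule set_eqI)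
        fix x
        have wk: "\<And>k. k \<in> I \<Longrightarrow> w k \<in> space Mv" using w by (auto simp: space_PiM)
        have "x \<in> Pair w -` (?T -` PiE I A \<inter> space ?Om) \<longleftrightarrow> x \<in> extensional I \<and> (\<forall>k\<in>I. ?h (w k, x k) \<in> A k)"
          using w by (simp add: space_pair_measure space_PiM PiE_iff conj_commute)
        moreover have "x \<in> PiE I (\<lambda>k. Pair (w k) -` S k) \<longleftrightarrow> x \<in> extensional I \<and> (\<forall>k\<in>I. ?h (w k, x k) \<in> A k)"
          using wk by (auto simp: S_def space_pair_measure PiE_iff)
        ultimately show "x \<in> Pair w -` (?T -` PiE I A \<inter> space ?Om) \<longleftrightarrow> x \<in> PiE I (\<lambda>k. Pair (w k) -` S k)" by simp
      qed
      moreover have "emeasure (PiM I (\<lambda>_. N0)) (PiE I (\<lambda>k. Pair (w k) -` S k)) = (\<Prod>k\<in>I. emeasure N0 (Pair (w k) -` S k))"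
        by (rule PN.emeasure_PiM[OF I]) (rule sets_Pair1[OF S], simp)
      ultimately show "emeasure (PiM I (\<lambda>_. N0)) (Pair w -` (?T -` PiE I A \<inter> space ?Om)) = (\<Prod>k\<in>I. emeasure N0 (Pair (w k) -` S k))"
        by simp
    qed
    also have "\<dots> = (\<Prod>k\<in>I. \<integral>\<^sup>+ v. emeasure N0 (Pair v -` S k) \<partial>Mv)"
      by (rule PV.product_nn_integral_prod[OF I, where f="\<lambda>k v. emeasure N0 (Pair v -` S k)"])
         (auto intro!: N.measurable_emeasure_Pair S)
    also have "\<dots> = (\<Prod>k\<in>I. emeasure F (A k))"
    proof (rule prod.cong[OF refl])
      fix k assume k: "k \<in> I"
      have "(\<integral>\<^sup>+ v. emeasure N0 (Pair v -` S k) \<partial>Mv) = emeasure ?K (S k)"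
        by (rule N.emeasure_pair_measure_alt[symmetric]) (rule S[OF k])
      also have "\<dots> = emeasure F (A k)"
        unfolding FK S_def using k by (subst emeasure_distr) auto
      finally show "(\<integral>\<^sup>+ v. emeasure N0 (Pair v -` S k) \<partial>Mv) = emeasure F (A k)" .
    qed
    finally show "emeasure (distr ?Om (PiM I (\<lambda>_. F)) ?T) (PiE I A) = (\<Prod>k\<in>I. emeasure F (A k))" .
  qed
qed



lemma Jensen_nn:
  fixes g :: "'a \<Rightarrow> real"
  assumes M: "prob_space M" and g: "integrable M g"
  shows "ennreal (((\<integral>x. g x \<partial>M) - c)\<^sup>2) \<le> (\<integral>\<^sup>+ x. ennreal ((g x - c)\<^sup>2) \<partial>M)"
proof (cases "(\<integral>\<^sup>+ x. ennreal ((g x - c)\<^sup>2) \<partial>M) = \<infinity>")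
  case True then show ?thesis by simp
next
  case False
  interpret prob_space M by (rule M)
  have gm[measurable]: "g \<in> borel_measurable M" using g by auto
  have i2: "integrable M (\<lambda>x. (g x - c)\<^sup>2)"
    by (rule integrableI_nonneg) (use False in \<open>auto simp: top.not_eq_extremum\<close>)
  have ic: "integrable M (\<lambda>x. g x - c)" using g by auto
  have "((\<integral>x. g x - c \<partial>M))\<^sup>2 \<le> (\<integral>x. (g x - c)\<^sup>2 \<partial>M)"
    using jensens_inequality[OF ic, of UNIV, where q=power2] i2 convex_power2 by auto
  moreover have "(\<integral>x. g x - c \<partial>M) = (\<integral>x. g x \<partial>M) - c" using g by (simp add: prob_space)
  moreover have "(\<integral>\<^sup>+ x. ennreal ((g x - c)\<^sup>2) \<partial>M) = ennreal (\<integral>x. (g x - c)\<^sup>2 \<partial>M)"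
    by (rule nn_integral_eq_integral[OF i2]) auto
  ultimately show ?thesis by (simp add: ennreal_leI)
qed

lemma hbi_distr_iff:
  fixes f :: "'a \<Rightarrow> real"
  shows "f \<in> borel_measurable N \<Longrightarrow> g \<in> measurable M N \<Longrightarrow>
    has_bochner_integral (distr M N g) f x \<longleftrightarrow> has_bochner_integral M (\<lambda>x. f (g x)) x"
  by (simp add: has_bochner_integral_iff integrable_distr_eq integral_distr)

lemma hbi_crps_form:
  assumes "\<And>i. i < N \<Longrightarrow> has_bochner_integral M (f i) (a i)" "\<And>i. i < N \<Longrightarrow> has_bochner_integral M (g i) (b i)"
  shows "has_bochner_integral M (\<lambda>x. (1 / real N) * (\<Sum>i<N. f i x - 1/2 * g i x)) ((1 / real N) * (\<Sum>i<N. a i - 1/2 * b i))"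
  by (intro has_bochner_integral_mult_right has_bochner_integral_sum has_bochner_integral_diff assms) auto

lemma draw_idx_simps: "finite (draw_idx N)" "i < N \<Longrightarrow> (i, 1) \<in> draw_idx N" "i < N \<Longrightarrow> (i, 2) \<in> draw_idx N"
  by (auto simp: draw_idx_def)

lemma MC_props:
  fixes F :: "real measure"
  assumes F: "prob_space F" "sets F = sets borel" and Fi: "integrable F (\<lambda>x. x)" and Npos: "N > 0"
  shows "has_bochner_integral (PiM (draw_idx N) (\<lambda>_. F)) (crps_N N y) (crps F y)"
proof -
  interpret F: prob_space F by (rule F)
  interpret FF: pair_prob_space F F ..
  let ?I = "draw_idx N" let ?P = "PiM (draw_idx N) (\<lambda>_. F)"
  have sb[measurable_cong]: "sets F = sets borel" by (rule F)
  have comp[measurable]: "(\<lambda>w. w k) \<in> borel_measurable ?P" if "k \<in> ?I" for k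
    using that by measurable
  have c1: "has_bochner_integral ?P (\<lambda>w. \<bar>w k - y\<bar>) (\<integral>x. \<bar>x - y\<bar> \<partial>F)" if k: "k \<in> ?I" for k
  proof -
    have "integrable F (\<lambda>x. \<bar>x - y\<bar>)" using Fi by auto
    then have "has_bochner_integral F (\<lambda>x. \<bar>x - y\<bar>) (\<integral>x. \<bar>x - y\<bar> \<partial>F)" by (simp add: has_bochner_integral_iff)
    then have "has_bochner_integral (distr ?P F (\<lambda>w. w k)) (\<lambda>x. \<bar>x - y\<bar>) (\<integral>x. \<bar>x - y\<bar> \<partial>F)"
      using PiM_single[OF F(1) k] by simp
    then show ?thesis
      by (subst (asm) hbi_distr_iff) (auto simp: measurable_cong_sets[OF refl sb] measurable_cong_sets[OF sb refl] k)
  qed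
  have ik: "integrable ?P (\<lambda>w. w k)" if k: "k \<in> ?I" for k
  proof -
    have "integrable (distr ?P F (\<lambda>w. w k)) (\<lambda>x. x)" using PiM_single[OF F(1) k] Fi by simp
    then show ?thesis by (subst (asm) integrable_distr_eq) (auto simp: measurable_cong_sets[OF refl sb] measurable_cong_sets[OF sb refl] k)
  qed
  have c2: "has_bochner_integral ?P (\<lambda>w. \<bar>w a - w b\<bar>) (\<integral>x. (\<integral>x'. \<bar>x - x'\<bar> \<partial>F) \<partial>F)"
    if ab: "a \<in> ?I" "b \<in> ?I" "a \<noteq> b" for a b
  proof -
    have pm[measurable]: "(\<lambda>z. (z a, z b)) \<in> measurable ?P (F \<Otimes>\<^sub>M F)"
      using ab by measurable
    have fm[measurable]: "(\<lambda>p. \<bar>fst p - snd p\<bar>) \<in> borel_measurable (F \<Otimes>\<^sub>M F)" by measurable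
    have iP: "integrable ?P (\<lambda>w. \<bar>w a - w b\<bar>)" using ik[OF ab(1)] ik[OF ab(2)] by auto
    have D: "distr ?P (F \<Otimes>\<^sub>M F) (\<lambda>z. (z a, z b)) = F \<Otimes>\<^sub>M F"
      by (rule PiM_pair[OF F(1) draw_idx_simps(1) ab])
    have iFF: "integrable (F \<Otimes>\<^sub>M F) (\<lambda>p. \<bar>fst p - snd p\<bar>)"
      using integrable_distr_eq[OF pm fm] iP D by simp
    have "(\<integral>x. (\<integral>x'. \<bar>x - x'\<bar> \<partial>F) \<partial>F) = (\<integral>p. \<bar>fst p - snd p\<bar> \<partial>(F \<Otimes>\<^sub>M F))"
      using FF.integral_fst'[OF iFF] by simp
    then have "has_bochner_integral (F \<Otimes>\<^sub>M F) (\<lambda>p. \<bar>fst p - snd p\<bar>) (\<integral>x. (\<integral>x'. \<bar>x - x'\<bar> \<partial>F) \<partial>F)"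
      using iFF by (simp add: has_bochner_integral_iff)
    then show ?thesis using hbi_distr_iff[OF fm pm] D by simp
  qed
  have "has_bochner_integral ?P (crps_N N y)
     ((1 / real N) * (\<Sum>i<N. (\<integral>x. \<bar>x - y\<bar> \<partial>F) - 1/2 * (\<integral>x. (\<integral>x'. \<bar>x - x'\<bar> \<partial>F) \<partial>F)))"
    unfolding crps_N_def
    apply (rule hbi_crps_form[where f="\<lambda>i w. \<bar>w (i,1) - y\<bar>" and g="\<lambda>i w. \<bar>w (i,1) - w (i,2)\<bar>"])
     apply (rule c1, simp add: draw_idx_def)
    apply (rule c2, auto simp: draw_idx_def)
    done
  then show ?thesis using Npos by (simp add: crps_def)
qed



lemma hbi_cong_val: "has_bochner_integral M f x \<Longrightarrow> (\<And>z. z \<in> space M \<Longrightarrow> f z = g z) \<Longrightarrow> x = x' \<Longrightarrow> has_bochner_integral M g x'"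
  using has_bochner_integral_cong by blast

lemma inner:
  fixes w :: "nat \<times> nat \<Rightarrow> 'v" and \<mu> \<sigma> :: "'v \<Rightarrow> real"
  assumes pos: "\<And>k. k \<in> draw_idx N \<Longrightarrow> \<sigma> (w k) > 0"
  shows "has_bochner_integral (PiM (draw_idx N) (\<lambda>_. N0))
           (\<lambda>z. crps_N N y (\<lambda>k\<in>draw_idx N. \<mu> (w k) + \<sigma> (w k) * z k)) (crps_N_RB \<mu> \<sigma> N y w)"
proof -
  let ?I = "draw_idx N" let ?P = "PiM (draw_idx N) (\<lambda>_. N0)"
  have d1: "has_bochner_integral ?P (\<lambda>z. \<bar>m + s * z k\<bar>) (Mfun m (s\<^sup>2))" if k: "k \<in> ?I" and s: "s > 0" for k m s
  proof -
    have "has_bochner_integral N0 (\<lambda>x. \<bar>m + s * x\<bar>) (Mfun m (s\<^sup>2))"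
      using GN1_int[of m s] GN1[OF s, of m] by (simp add: has_bochner_integral_iff)
    then have "has_bochner_integral (distr ?P N0 (\<lambda>z. z k)) (\<lambda>x. \<bar>m + s * x\<bar>) (Mfun m (s\<^sup>2))"
      using PiM_single[OF N0_prob k] by simp
    then show ?thesis
      by (subst (asm) hbi_distr_iff) (auto simp: k measurable_cong_sets[OF refl sets_N0])
  qed
  have d2: "has_bochner_integral ?P (\<lambda>z. \<bar>m + s1 * z a - s2 * z b\<bar>) (Mfun m (s1\<^sup>2 + s2\<^sup>2))"
    if ab: "a \<in> ?I" "b \<in> ?I" "a \<noteq> b" and s: "s1 > 0" "s2 > 0" for a b m s1 s2
  proof -
    have pm[measurable]: "(\<lambda>z. (z a, z b)) \<in> measurable ?P (N0 \<Otimes>\<^sub>M N0)"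
      using ab by measurable
    have fm[measurable]: "(\<lambda>p. \<bar>m + s1 * fst p - s2 * snd p\<bar>) \<in> borel_measurable (N0 \<Otimes>\<^sub>M N0)" by measurable
    have D: "distr ?P (N0 \<Otimes>\<^sub>M N0) (\<lambda>z. (z a, z b)) = N0 \<Otimes>\<^sub>M N0"
      by (rule PiM_pair[OF N0_prob draw_idx_simps(1) ab])
    have "has_bochner_integral (N0 \<Otimes>\<^sub>M N0) (\<lambda>p. \<bar>m + s1 * fst p - s2 * snd p\<bar>) (Mfun m (s1\<^sup>2 + s2\<^sup>2))"
      using GN2[OF s, of m] by (simp add: has_bochner_integral_iff)
    then show ?thesis using hbi_distr_iff[OF fm pm] D by simp
  qed
  have "has_bochner_integral ?P
     (\<lambda>z. (1 / real N) * (\<Sum>i<N. \<bar>(\<mu> (w (i,1)) - y) + \<sigma> (w (i,1)) * z (i,1)\<bar>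
        - 1/2 * \<bar>(\<mu> (w (i,1)) - \<mu> (w (i,2))) + \<sigma> (w (i,1)) * z (i,1) - \<sigma> (w (i,2)) * z (i,2)\<bar>))
     ((1 / real N) * (\<Sum>i<N. Mfun (\<mu> (w (i,1)) - y) ((\<sigma> (w (i,1)))\<^sup>2)
        - 1/2 * Mfun (\<mu> (w (i,1)) - \<mu> (w (i,2))) ((\<sigma> (w (i,1)))\<^sup>2 + (\<sigma> (w (i,2)))\<^sup>2)))"
    apply (rule hbi_crps_form)
     apply (rule d1)
      apply (simp add: draw_idx_def)
     apply (rule pos, simp add: draw_idx_def)
    apply (rule d2)
        apply (auto simp: draw_idx_def intro!: pos)
    done
  then show ?thesis
    unfolding crps_N_def crps_N_RB_def
    apply (rule hbi_cong_val)
     apply (intro arg_cong[where f="\<lambda>x. (1 / real N) * x"] sum.cong refl)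
     apply (simp add: draw_idx_def algebra_simps)
    apply simp
    done
qed



theorem proposition5:
  fixes Mv :: "'v measure" and \<mu> \<sigma> :: "'v \<Rightarrow> real"
    and F :: "real measure" and y :: real and N :: nat
  assumes "prob_space Mv"
    and "\<mu> \<in> borel_measurable Mv" and "\<sigma> \<in> borel_measurable Mv"
    and "\<And>v. v \<in> space Mv \<Longrightarrow> \<sigma> v > 0"
    and "prob_space F" and "sets F = sets borel"
    and "\<And>x. measure F {..x} = (\<integral>v. std_Phi ((x - \<mu> v) / \<sigma> v) \<partial>Mv)"
    and "integrable F (\<lambda>x. x)"
    and "N > 0"
  shows "expect (PiM (draw_idx N) (\<lambda>_. Mv)) (crps_N_RB \<mu> \<sigma> N y) = crps F y \<and>
         var_ext (PiM (draw_idx N) (\<lambda>_. Mv)) (crps_N_RB \<mu> \<sigma> N y)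
         \<le> var_ext (PiM (draw_idx N) (\<lambda>_. F)) (crps_N N y)"
proof -
  note Mv = assms(1) and mm[measurable] = assms(2,3) and pos = assms(4) and Fp = assms(5,6)
  note sb[measurable_cong] = assms(6)
  let ?I = "draw_idx N"
  let ?Pw = "PiM ?I (\<lambda>_. Mv)" and ?Pz = "PiM ?I (\<lambda>_. N0)" and ?PF = "PiM ?I (\<lambda>_. F)"
  let ?Om = "?Pw \<Otimes>\<^sub>M ?Pz"
  let ?T = "\<lambda>p. \<lambda>k\<in>?I. \<mu> (fst p k) + \<sigma> (fst p k) * snd p k"
  let ?RB = "crps_N_RB \<mu> \<sigma> N y" and ?MC = "crps_N N y"
  have I: "finite ?I" by (rule draw_idx_simps)
  have FK: "F = distr (Mv \<Otimes>\<^sub>M N0) borel (\<lambda>p. \<mu> (fst p) + \<sigma> (fst p) * snd p)"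
    by (rule mixture_eq[OF Mv mm pos Fp assms(7)])
  have TP: "distr ?Om ?PF ?T = ?PF"
    by (rule T_push[OF Mv mm I FK])
  have fpp: "finite_product_prob_space (\<lambda>_. M) ?I" if "prob_space M" for M :: "'b measure"
    by (simp add: finite_product_prob_space_def finite_product_sigma_finite_def product_prob_space_def product_sigma_finite_def product_prob_space_axioms_def finite_product_sigma_finite_axioms_def that I prob_space_imp_sigma_finite)
  interpret PV: finite_product_prob_space "\<lambda>_. Mv" ?I by (rule fpp[OF Mv])
  interpret PN: finite_product_prob_space "\<lambda>_. N0" ?I by (rule fpp[OF N0_prob])
  interpret PF: finite_product_prob_space "\<lambda>_. F" ?I by (rule fpp[OF Fp(1)])
  interpret Om: pair_prob_space ?Pw ?Pz ..
  have Tm[measurable]: "?T \<in> measurable ?Om ?PF"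
  proof (rule measurable_restrict)
    fix k assume k: "k \<in> ?I"
    have "(\<lambda>p. \<mu> (fst p k) + \<sigma> (fst p k) * snd p k) \<in> borel_measurable ?Om"
      using k by measurable
    then show "(\<lambda>p. \<mu> (fst p k) + \<sigma> (fst p k) * snd p k) \<in> measurable ?Om F"
      by (simp add: measurable_cong_sets[OF refl sb])
  qed
  have MCm[measurable]: "?MC \<in> borel_measurable ?PF"
    unfolding crps_N_def by (measurable; simp add: draw_idx_def)
  have RBm[measurable]: "?RB \<in> borel_measurable ?Pw"
    unfolding crps_N_RB_def by (measurable; simp add: draw_idx_def)
  have MC: "has_bochner_integral ?PF ?MC (crps F y)"
    by (rule MC_props[OF Fp assms(8,9)])
  have MCT: "has_bochner_integral ?Om (\<lambda>p. ?MC (?T p)) (crps F y)"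
    using MC TP hbi_distr_iff[OF MCm Tm] by simp
  have inn: "has_bochner_integral ?Pz (\<lambda>z. ?MC (?T (w, z))) (?RB w)" if w: "w \<in> space ?Pw" for w
  proof -
    have "\<And>k. k \<in> ?I \<Longrightarrow> \<sigma> (w k) > 0" using w pos by (auto simp: space_PiM)
    then show ?thesis using inner[where N=N and \<sigma>=\<sigma> and w=w and \<mu>=\<mu> and y=y] by simp
  qed
  have E: "expect ?Pw ?RB = crps F y"
  proof -
    have "expect ?Pw ?RB = (\<integral>w. (\<integral>z. ?MC (?T (w, z)) \<partial>?Pz) \<partial>?Pw)"
      unfolding expect_def
      by (rule Bochner_Integration.integral_cong[OF refl]) (use inn in \<open>auto simp: has_bochner_integral_iff\<close>)
    also have "\<dots> = (\<integral>p. ?MC (?T p) \<partial>?Om)"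
      using Om.integral_fst'[of "\<lambda>p. ?MC (?T p)"] MCT by (simp add: has_bochner_integral_iff)
    also have "\<dots> = crps F y" using MCT by (simp add: has_bochner_integral_iff)
    finally show ?thesis .
  qed
  have EF: "expect ?PF ?MC = crps F y" using MC by (simp add: expect_def has_bochner_integral_iff)
  have "var_ext ?Pw ?RB = (\<integral>\<^sup>+ w. ennreal ((?RB w - crps F y)\<^sup>2) \<partial>?Pw)"
    unfolding var_ext_def E ..
  also have "\<dots> \<le> (\<integral>\<^sup>+ w. (\<integral>\<^sup>+ z. ennreal ((?MC (?T (w, z)) - crps F y)\<^sup>2) \<partial>?Pz) \<partial>?Pw)"
  proof (rule nn_integral_mono)
    fix w assume w: "w \<in> space ?Pw"
    have "?RB w = (\<integral>z. ?MC (?T (w, z)) \<partial>?Pz)" using inn[OF w] by (simp add: has_bochner_integral_iff)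
    moreover have "integrable ?Pz (\<lambda>z. ?MC (?T (w, z)))" using inn[OF w] by (simp add: has_bochner_integral_iff)
    ultimately show "ennreal ((?RB w - crps F y)\<^sup>2) \<le> (\<integral>\<^sup>+ z. ennreal ((?MC (?T (w, z)) - crps F y)\<^sup>2) \<partial>?Pz)"
      using Jensen_nn[OF PN.prob_space_axioms, of "\<lambda>z. ?MC (?T (w, z))" "crps F y"] by simp
  qed
  also have "\<dots> = (\<integral>\<^sup>+ p. ennreal ((?MC (?T p) - crps F y)\<^sup>2) \<partial>?Om)"
  proof -
    have "(\<lambda>p. ennreal ((?MC (?T p) - crps F y)\<^sup>2)) \<in> borel_measurable ?Om" by measurable
    from sigma_finite_measure.nn_integral_fst[OF prob_space_imp_sigma_finite[OF PN.prob_space_axioms] this] show ?thesis by simp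
  qed
  also have "\<dots> = (\<integral>\<^sup>+ x. ennreal ((?MC x - crps F y)\<^sup>2) \<partial>?PF)"
    using nn_integral_distr[OF Tm, of "\<lambda>x. ennreal ((?MC x - crps F y)\<^sup>2)"] TP by simp
  also have "\<dots> = var_ext ?PF ?MC"
    unfolding var_ext_def EF ..
  finally show ?thesis using E by simp
qed


end
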